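(* Let $s$ and $l$ be two positive integers. Let $p$ be an odd prime such that $p\ge l+2$ and $p-1$ divides none of $sl$ and $ks+1$ for $k=1,\dots,l$. Then the homogeneous multiple harmonic sum satisfies $$H(\{s\}^l; p-1)\equiv S(\{s\}^l; p-1)\equiv 0 \pmod{p^{\mathrm{par}(ls-1)}}.$$ In particular, if $p\ge ls+3$ then the congruence $H(\{s\}^l; p-1)\equiv S(\{s\}^l; p-1)\equiv 0 \pmod{p^{\mathrm{par}(ls-1)}}$ always holds, and so $p\mid H(\{s\}^l; p-1)$.
   Context: For positive integers $s_1,\dots,s_l$ and $n\ge 0$, $H(s_1,\dots,s_l;n)=\sum_{1\le k_1<\dots<k_l\le n} k_1^{-s_1}\cdots k_l^{-s_l}$ and $S(s_1,\dots,s_l;n)=\sum_{1\le k_1\le \dots\le k_l\le n} k_1^{-s_1}\cdots k_l^{-s_l}$. The notation $\{s\}^l$ denotes the sequence $(s,\dots,s)$ with $s$ repeated $l$ times. $\mathrm{par}(m)$ denotes the parity of $m$: it equals $1$ if $m$ is odd and $2$ if $m$ is even. *)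

theory Defs
  imports Complex_Main "HOL-Computational_Algebra.Primes"
begin

definition MHS :: "nat list \<Rightarrow> nat \<Rightarrow> rat" where
  "MHS ss n = (\<Sum>ks \<in> {ks. length ks = length ss \<and> sorted_wrt (<) ks \<and> set ks \<subseteq> {1..n}}.
       \<Prod>i<length ss. 1 / (of_nat (ks ! i)) ^ (ss ! i))"

definition MHSS :: "nat list \<Rightarrow> nat \<Rightarrow> rat" where
  "MHSS ss n = (\<Sum>ks \<in> {ks. length ks = length ss \<and> sorted_wrt (\<le>) ks \<and> set ks \<subseteq> {1..n}}.
       \<Prod>i<length ss. 1 / (of_nat (ks ! i)) ^ (ss ! i))"

definition par :: "nat \<Rightarrow> nat" where
  "par m = (if odd m then 1 else 2)"

text \<open>A rational r is congruent to 0 modulo m (m an integer, here a prime power p^k, k>=1)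
  iff m divides the numerator of r in lowest terms and the denominator is coprime to m;
  for m = p^k this is exactly v_p(r) >= k.\<close>
definition rat_cong0 :: "rat \<Rightarrow> int \<Rightarrow> bool" where
  "rat_cong0 r m = (m dvd fst (quotient_of r) \<and> coprime (snd (quotient_of r)) m)"

end

theory Submission
  imports Defs "HOL-Number_Theory.Number_Theory" "HOL-Combinatorics.Permutations" "HOL-Library.Multiset"
begin


lemma prod_nth_list: "(\<Prod>i<length ks. f (ks ! i)) = prod_list (map f ks)"
  by (induction ks) (simp_all add: prod.lessThan_Suc_shift del: prod.lessThan_Suc)

lemma cong_prod_list:
  "(\<And>x. x \<in> set xs \<Longrightarrow> [f x = g x] (mod (n::int))) \<Longrightarrow>
   [prod_list (map f xs) = prod_list (map g xs)] (mod n)"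
  by (induction xs) (auto intro: cong_mult)

lemma prod_list_cmult: "prod_list (map (\<lambda>x. (c::int) * f x) xs) = c ^ length xs * prod_list (map f xs)"
  by (induction xs) (simp_all add: algebra_simps)

lemma prod_list_mult: "prod_list (map (\<lambda>x. (f x::int) * h x) xs) = prod_list (map f xs) * prod_list (map h xs)"
  by (induction xs) (simp_all add: algebra_simps)

lemma sum_list_cmult: "sum_list (map (\<lambda>x. (c::int) * f x) xs) = c * sum_list (map f xs)"
  by (induction xs) (simp_all add: algebra_simps)

lemma prod_one_minus:
  fixes q :: int
  shows "[prod_list (map (\<lambda>x. 1 - q * f x) xs) = 1 - q * sum_list (map f xs)] (mod q^2)"
proof (induction xs)
  case Nil then show ?case by simp
next
  case (Cons x xs)
  let ?S = "sum_list (map f xs)"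
  have "[(1 - q * f x) * prod_list (map (\<lambda>x. 1 - q * f x) xs) = (1 - q * f x) * (1 - q * ?S)] (mod q^2)"
    by (rule cong_mult[OF cong_refl Cons.IH])
  moreover have "[(1 - q * f x) * (1 - q * ?S) = 1 - q * (f x + ?S)] (mod q^2)"
    unfolding cong_iff_dvd_diff
    by (rule dvdI[of _ _ "f x * ?S"]) (simp add: algebra_simps power2_eq_square)
  ultimately show ?case by (auto intro: cong_trans)
qed

lemma binom_mod_sq:
  fixes y k :: int
  shows "[(y - k)^(Suc n) = (-k)^(Suc n) + of_nat (Suc n) * y * (-k)^n] (mod y^2)"
proof (induction n)
  case 0 then show ?case by simp
next
  case (Suc n)
  let ?K = "(-k)^n"
  have "[(y - k) * (y - k)^(Suc n) = (y - k) * ((-k)^(Suc n) + of_nat (Suc n) * y * ?K)] (mod y^2)"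
    by (rule cong_mult[OF cong_refl Suc.IH])
  moreover have "[(y - k) * ((-k)^(Suc n) + of_nat (Suc n) * y * ?K)
      = (-k)^(Suc (Suc n)) + of_nat (Suc (Suc n)) * y * (-k)^(Suc n)] (mod y^2)"
    unfolding cong_iff_dvd_diff
    by (rule dvdI[of _ _ "of_nat (Suc n) * ?K"]) (simp add: algebra_simps power2_eq_square)
  ultimately show ?case by (auto intro: cong_trans)
qed

lemma fermat_int:
  assumes "prime p" "k \<in> {1..p-1}"
  shows "int p dvd (int k ^ (p - 1) - 1)"
proof -
  have "\<not> p dvd k" using assms by (auto dest: dvd_imp_le)
  then have "[k ^ (p - 1) = 1] (mod p)" using fermat_theorem[OF assms(1)] by blast
  then have "[int k ^ (p - 1) = 1] (mod int p)" by (metis cong_int_iff of_nat_1 of_nat_power)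
  then show ?thesis by (simp add: cong_iff_dvd_diff)
qed

lemma refl_elem:
  assumes "prime p" "k \<in> {1..p-1}" "odd m"
  shows "[(int p - int k)^m = (-1) * (int k ^ m * (1 - int p * (int m * int k ^ (p - 2))))] (mod (int p)^2)"
proof -
  obtain n where m: "m = Suc n" using assms(3) by (cases m) auto
  have en: "even n" using assms(3) m by simp
  have p2: "p \<ge> 2" using assms(1) prime_ge_2_nat by blast
  have A: "[(int p - int k)^m = (-int k)^(Suc n) + of_nat (Suc n) * int p * (-int k)^n] (mod (int p)^2)"
    using binom_mod_sq m by simp
  have A1: "(-int k)^(Suc n) = - (int k ^ m)" using en m by simp
  have A2: "(-int k)^n = int k ^ n" using en by simp
  have B: "[int p * int k ^ n = int p * (int k ^ m * int k ^ (p - 2))] (mod (int p)^2)"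
  proof -
    have e: "int k ^ m * int k ^ (p - 2) = int k ^ n * int k ^ (p - 1)"
    proof -
      have "m + (p-2) = n + (p-1)" using m p2 by simp
      then show ?thesis by (metis power_add)
    qed
    obtain t where t: "int k ^ (p - 1) - 1 = int p * t" using fermat_int[OF assms(1,2)] by (auto elim: dvdE)
    have t': "int k ^ (p - 1) = 1 + int p * t" using t by simp
    show ?thesis unfolding cong_iff_dvd_diff e t'
      by (rule dvdI[of _ _ "- (int k ^ n * t)"]) (simp add: algebra_simps power2_eq_square)
  qed
  have C: "[- (int k ^ m) + int m * (int p * int k ^ n) = - (int k ^ m) + int m * (int p * (int k ^ m * int k ^ (p - 2)))] (mod (int p)^2)"
    by (intro cong_add cong_mult cong_refl B)
  have D: "(-int k)^(Suc n) + of_nat (Suc n) * int p * (-int k)^n = - (int k ^ m) + int m * (int p * int k ^ n)"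
    unfolding A1 A2 m by simp
  have E: "- (int k ^ m) + int m * (int p * (int k ^ m * int k ^ (p - 2))) = (-1) * (int k ^ m * (1 - int p * (int m * int k ^ (p - 2))))"
    by (simp add: algebra_simps)
  show ?thesis using A C unfolding D E by (rule cong_trans)
qed



definition LL :: "(nat list \<Rightarrow> bool) \<Rightarrow> nat \<Rightarrow> nat \<Rightarrow> nat list set" where
  "LL R l n = {ks. length ks = l \<and> R ks \<and> set ks \<subseteq> {1..n}}"

definition goodR :: "(nat list \<Rightarrow> bool) \<Rightarrow> bool" where
  "goodR R \<longleftrightarrow> (\<forall>ks. R ks \<longrightarrow> sorted ks) \<and> (\<forall>ks f. R ks \<longrightarrow> inj_on f (set ks) \<longrightarrow> R (sort (map f ks)))"

lemma goodR_lt: "goodR (sorted_wrt (<))"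
  unfolding goodR_def by (auto simp: strict_sorted_iff distinct_map)

lemma goodR_le: "goodR (sorted_wrt (\<le>))"
  unfolding goodR_def by auto

lemma LL_closed:
  assumes "goodR R" "\<sigma> permutes {1..n}" "ks \<in> LL R l n"
  shows "sort (map \<sigma> ks) \<in> LL R l n"
proof -
  have "inj_on \<sigma> (set ks)" using permutes_inj[OF assms(2)] by (auto intro: inj_on_subset)
  moreover have "\<sigma> ` set ks \<subseteq> {1..n}"
    using assms(3) permutes_image[OF assms(2)] unfolding LL_def by blast
  ultimately show ?thesis using assms(1,3) unfolding LL_def goodR_def by auto
qed

lemma sort_map_sort: "sort (map f (sort xs)) = sort (map f (xs::nat list))"
  by (rule properties_for_sort) (simp_all)

lemma prod_list_sort: "prod_list (map (f::nat\<Rightarrow>int) (sort xs)) = prod_list (map f (xs :: nat list))"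
  proof -
  have "prod_list (map f (sort xs)) = prod_mset (mset (map f (sort xs)))" by (rule prod_mset_prod_list[symmetric])
  also have "mset (map f (sort xs)) = mset (map f xs)" by simp
  also have "prod_mset (mset (map f xs)) = prod_list (map f xs)" by (rule prod_mset_prod_list)
  finally show ?thesis .
qed

lemma sum_list_sort: "sum_list (map (f::nat\<Rightarrow>int) (sort xs)) = sum_list (map f (xs :: nat list))"
  proof -
  have "sum_list (map f (sort xs)) = sum_mset (mset (map f (sort xs)))" by (rule sum_mset_sum_list[symmetric])
  also have "mset (map f (sort xs)) = mset (map f xs)" by simp
  also have "sum_mset (mset (map f xs)) = sum_list (map f xs)" by (rule sum_mset_sum_list)
  finally show ?thesis .
qed

lemma reindex_perm:
  assumes "goodR R" "\<sigma> permutes {1..n}"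
  shows "sum \<Phi> (LL R l n) = sum (\<lambda>ks. \<Phi> (sort (map \<sigma> ks))) (LL R l n)"
proof -
  have inv: "inv_into UNIV \<sigma> permutes {1..n}" using assms(2) by (rule permutes_inv)
  have srt: "sorted ks" if "ks \<in> LL R l n" for ks
    using that assms(1) unfolding LL_def goodR_def by auto
  have id1: "map (inv_into UNIV \<sigma>) (map \<sigma> ks) = ks" for ks
    by (simp add: map_idI permutes_inverses[OF assms(2)])
  have id2: "map \<sigma> (map (inv_into UNIV \<sigma>) ks) = ks" for ks
    by (simp add: map_idI permutes_inverses[OF assms(2)])
  show ?thesis
  proof (rule sum.reindex_bij_witness[where j = "\<lambda>ks. sort (map (inv_into UNIV \<sigma>) ks)" and i = "\<lambda>ks. sort (map \<sigma> ks)"], goal_cases)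
    case (1 a) then show ?case using srt[OF 1] by (simp only: sort_map_sort id2 sorted_sort_id)
  next
    case (2 a) then show ?case using LL_closed[OF assms(1) inv] by blast
  next
    case (3 a) then show ?case using srt[OF 3] by (simp only: sort_map_sort id1 sorted_sort_id)
  next
    case (4 a) then show ?case using LL_closed[OF assms] by blast
  next
    case (5 a) then show ?case using srt[OF 5] by (simp only: sort_map_sort id2 sorted_sort_id)
  qed
qed

definition scl :: "nat \<Rightarrow> nat \<Rightarrow> nat \<Rightarrow> nat" where
  "scl p g k = (if k \<in> {1..p-1} then (g * k) mod p else k)"

definition rfl :: "nat \<Rightarrow> nat \<Rightarrow> nat" where
  "rfl p k = (if k \<in> {1..p-1} then p - k else k)"

lemma scl_permutes:
  assumes "prime p" "coprime g p"
  shows "scl p g permutes {1..p-1}"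
proof -
  have p1: "p > 1" using assms(1) prime_gt_1_nat by blast
  have ng: "\<not> p dvd g"
  proof
    assume pg: "p dvd g"
    show False using coprime_common_divisor[OF assms(2) pg dvd_refl] p1 by simp
  qed
  have inj: "inj_on (scl p g) {1..p-1}"
  proof (rule inj_onI)
    fix x y assume x: "x \<in> {1..p-1}" and y: "y \<in> {1..p-1}" and e: "scl p g x = scl p g y"
    then have "[g * x = g * y] (mod p)" unfolding scl_def cong_def by simp
    then have "[x = y] (mod p)" using assms(2) by (simp add: cong_mult_lcancel_nat coprime_commute)
    then show "x = y" using x y p1 unfolding cong_def by auto
  qed
  have img: "scl p g ` {1..p-1} \<subseteq> {1..p-1}"
  proof
    fix z assume "z \<in> scl p g ` {1..p-1}"
    then obtain k where k: "k \<in> {1..p-1}" "z = (g * k) mod p" unfolding scl_def by auto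
    have "\<not> p dvd k" using k p1 by (auto dest: dvd_imp_le)
    then have "\<not> p dvd g * k" using ng assms(1) prime_dvd_mult_iff by blast
    then have "(g * k) mod p \<noteq> 0" using dvd_eq_mod_eq_0 by blast
    moreover have "(g * k) mod p < p" using p1 by simp
    ultimately show "z \<in> {1..p-1}" using k by auto
  qed
  have "scl p g ` {1..p-1} = {1..p-1}" by (rule endo_inj_surj[OF _ img inj]) simp
  then have "bij_betw (scl p g) {1..p-1} {1..p-1}" using inj by (simp add: bij_betw_def)
  then show ?thesis by (rule bij_imp_permutes) (auto simp: scl_def)
qed

lemma rfl_permutes:
  assumes "p > 1"
  shows "rfl p permutes {1..p-1}"
proof -
  have inj: "inj_on (rfl p) {1..p-1}" by (rule inj_onI) (auto simp: rfl_def)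
  have img: "rfl p ` {1..p-1} \<subseteq> {1..p-1}" by (auto simp: rfl_def)
  have "rfl p ` {1..p-1} = {1..p-1}" by (rule endo_inj_surj[OF _ img inj]) simp
  then have "bij_betw (rfl p) {1..p-1} {1..p-1}" using inj by (simp add: bij_betw_def)
  then show ?thesis by (rule bij_imp_permutes) (auto simp: rfl_def)
qed

lemma scale_zero:
  fixes \<Phi> :: "nat list \<Rightarrow> int"
  assumes "goodR R" "\<sigma> permutes {1..n}" "prime (q::int)"
    and "\<And>ks. ks \<in> LL R l n \<Longrightarrow> [\<Phi> (sort (map \<sigma> ks)) = c * \<Phi> ks] (mod q)"
    and "\<not> [c = 1] (mod q)"
  shows "q dvd sum \<Phi> (LL R l n)"
proof -
  let ?S = "sum \<Phi> (LL R l n)"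
  have "?S = sum (\<lambda>ks. \<Phi> (sort (map \<sigma> ks))) (LL R l n)" by (rule reindex_perm[OF assms(1,2)])
  also have "[\<dots> = sum (\<lambda>ks. c * \<Phi> ks) (LL R l n)] (mod q)" by (rule cong_sum) (rule assms(4))
  also have "sum (\<lambda>ks. c * \<Phi> ks) (LL R l n) = c * ?S" by (simp add: sum_distrib_left)
  finally have "q dvd ?S - c * ?S" by (simp add: cong_iff_dvd_diff)
  moreover have "(c - 1) * ?S = - (?S - c * ?S)" by (simp add: algebra_simps)
  ultimately have "q dvd (c - 1) * ?S" by (metis dvd_minus_iff)
  moreover have "\<not> q dvd (c - 1)" using assms(5) by (simp add: cong_iff_dvd_diff)
  ultimately show ?thesis using assms(3) prime_dvd_mult_iff by blast
qed



lemma gpow_not1: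
  assumes "prime p" "ord p g = p - 1" "\<not> (p - 1) dvd N"
  shows "\<not> [int g ^ N = 1] (mod int p)"
proof
  assume "[int g ^ N = 1] (mod int p)"
  then have "[g ^ N = 1] (mod p)" by (metis cong_int_iff of_nat_1 of_nat_power)
  then have "ord p g dvd N" using ord_divides' by auto
  then show False using assms by simp
qed

lemma scl_elem:
  assumes "k \<in> {1..p-1}"
  shows "[int (scl p g k) = int g * int k] (mod int p)"
proof -
  have "[(g * k) mod p = g * k] (mod p)" by (simp add: cong_def)
  then have "[int ((g * k) mod p) = int (g * k)] (mod int p)" by (simp only: cong_int_iff)
  moreover have "scl p g k = (g * k) mod p" using assms by (simp add: scl_def)
  ultimately show ?thesis by simp
qed

lemma LL_elems: "ks \<in> LL R l n \<Longrightarrow> x \<in> set ks \<Longrightarrow> x \<in> {1..n}"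
  unfolding LL_def by auto

lemma LL_length: "ks \<in> LL R l n \<Longrightarrow> length ks = l"
  unfolding LL_def by auto

lemma cong_sum_list:
  "(\<And>x. x \<in> set xs \<Longrightarrow> [f x = g x] (mod (n::int))) \<Longrightarrow>
   [sum_list (map f xs) = sum_list (map g xs)] (mod n)"
  by (induction xs) (auto intro: cong_add)

lemma scale_prod:
  assumes "ks \<in> LL R l (p-1)"
  shows "[prod_list (map (\<lambda>k. int k ^ m) (sort (map (scl p g) ks))) = int g ^ (m * l) * prod_list (map (\<lambda>k. int k ^ m) ks)] (mod int p)"
proof -
  have "prod_list (map (\<lambda>k. int k ^ m) (sort (map (scl p g) ks))) = prod_list (map (\<lambda>k. int (scl p g k) ^ m) ks)"
    by (simp add: prod_list_sort o_def)
  also have "[\<dots> = prod_list (map (\<lambda>k. int g ^ m * int k ^ m) ks)] (mod int p)"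
  proof (rule cong_prod_list)
    fix x assume "x \<in> set ks"
    then have "[int (scl p g x) ^ m = (int g * int x) ^ m] (mod int p)"
      by (intro cong_pow scl_elem LL_elems[OF assms])
    then show "[int (scl p g x) ^ m = int g ^ m * int x ^ m] (mod int p)" by (simp add: power_mult_distrib)
  qed
  also have "prod_list (map (\<lambda>k. int g ^ m * int k ^ m) ks) = int g ^ (m * l) * prod_list (map (\<lambda>k. int k ^ m) ks)"
    by (simp add: prod_list_cmult LL_length[OF assms] power_mult)
  finally show ?thesis .
qed

lemma scale_sum:
  assumes "ks \<in> LL R l (p-1)"
  shows "[sum_list (map (\<lambda>k. int k ^ e) (sort (map (scl p g) ks))) = int g ^ e * sum_list (map (\<lambda>k. int k ^ e) ks)] (mod int p)"
proof -
  have "sum_list (map (\<lambda>k. int k ^ e) (sort (map (scl p g) ks))) = sum_list (map (\<lambda>k. int (scl p g k) ^ e) ks)"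
    by (simp add: sum_list_sort o_def)
  also have "[\<dots> = sum_list (map (\<lambda>k. int g ^ e * int k ^ e) ks)] (mod int p)"
  proof (rule cong_sum_list)
    fix x assume "x \<in> set ks"
    then have "[int (scl p g x) ^ e = (int g * int x) ^ e] (mod int p)"
      by (intro cong_pow scl_elem LL_elems[OF assms])
    then show "[int (scl p g x) ^ e = int g ^ e * int x ^ e] (mod int p)" by (simp add: power_mult_distrib)
  qed
  also have "sum_list (map (\<lambda>k. int g ^ e * int k ^ e) ks) = int g ^ e * sum_list (map (\<lambda>k. int k ^ e) ks)"
    by (rule sum_list_cmult)
  finally show ?thesis .
qed

lemma modp_A:
  assumes "goodR R" "prime p" "coprime g p" "ord p g = p - 1" "\<not> (p - 1) dvd (m * l)"
  shows "int p dvd (\<Sum>ks\<in>LL R l (p-1). prod_list (map (\<lambda>k. int k ^ m) ks))"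
proof (rule scale_zero[OF assms(1) scl_permutes[OF assms(2,3)] _ _ gpow_not1[OF assms(2,4,5)]])
  show "prime (int p)" using assms(2) by simp
next
  fix ks assume ks: "ks \<in> LL R l (p - 1)"
  show "[prod_list (map (\<lambda>k. int k ^ m) (sort (map (scl p g) ks))) = int g ^ (m * l) * prod_list (map (\<lambda>k. int k ^ m) ks)] (mod int p)"
    by (rule scale_prod[OF ks])
qed

lemma modp_B:
  assumes "goodR R" "prime p" "coprime g p" "ord p g = p - 1" "\<not> (p - 1) dvd (m * l + (p - 2))"
  shows "int p dvd (\<Sum>ks\<in>LL R l (p-1). prod_list (map (\<lambda>k. int k ^ m) ks) * sum_list (map (\<lambda>k. int k ^ (p - 2)) ks))"
proof (rule scale_zero[OF assms(1) scl_permutes[OF assms(2,3)] _ _ gpow_not1[OF assms(2,4,5)]])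
  show "prime (int p)" using assms(2) by simp
next
  fix ks assume ks: "ks \<in> LL R l (p - 1)"
  have "[prod_list (map (\<lambda>k. int k ^ m) (sort (map (scl p g) ks))) * sum_list (map (\<lambda>k. int k ^ (p - 2)) (sort (map (scl p g) ks)))
     = (int g ^ (m * l) * prod_list (map (\<lambda>k. int k ^ m) ks)) * (int g ^ (p - 2) * sum_list (map (\<lambda>k. int k ^ (p - 2)) ks))] (mod int p)"
    by (rule cong_mult[OF scale_prod[OF ks] scale_sum[OF ks]])
  then show "[prod_list (map (\<lambda>k. int k ^ m) (sort (map (scl p g) ks))) * sum_list (map (\<lambda>k. int k ^ (p - 2)) (sort (map (scl p g) ks)))
     = int g ^ (m * l + (p - 2)) * (prod_list (map (\<lambda>k. int k ^ m) ks) * sum_list (map (\<lambda>k. int k ^ (p - 2)) ks))] (mod int p)"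
    by (simp add: power_add algebra_simps)
qed



lemma modp2:
  assumes "goodR R" "prime p" "odd p" "coprime g p" "ord p g = p - 1" "odd m" "odd l"
    "\<not> (p - 1) dvd (m * l + (p - 2))"
  shows "(int p)^2 dvd (\<Sum>ks\<in>LL R l (p-1). prod_list (map (\<lambda>k. int k ^ m) ks))"
proof -
  let ?A = "LL R l (p-1)"
  let ?P = "\<lambda>ks. prod_list (map (\<lambda>k. int k ^ m) ks)"
  let ?B = "\<lambda>ks. sum_list (map (\<lambda>k. int k ^ (p - 2)) ks)"
  let ?Y = "sum ?P ?A"
  have p1: "p > 1" using assms(2) prime_gt_1_nat by blast
  obtain t where t: "sum (\<lambda>ks. ?P ks * ?B ks) ?A = int p * t"
    using modp_B[OF assms(1,2,4,5,8)] by (auto elim: dvdE)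
  have elem: "[?P (sort (map (rfl p) ks)) = - ?P ks + int p * int m * (?P ks * ?B ks)] (mod (int p)^2)"
    if ks: "ks \<in> ?A" for ks
  proof -
    have "?P (sort (map (rfl p) ks)) = prod_list (map (\<lambda>k. (int p - int k) ^ m) ks)"
    proof -
      have "?P (sort (map (rfl p) ks)) = prod_list (map (\<lambda>k. int (rfl p k) ^ m) ks)"
        by (simp add: prod_list_sort o_def)
      also have "\<dots> = prod_list (map (\<lambda>k. (int p - int k) ^ m) ks)"
      proof -
        have rf: "int (rfl p x) = int p - int x" if "x \<in> set ks" for x
        proof -
          have x: "x \<in> {1..p-1}" using LL_elems[OF ks that] .
          then have "x \<le> p" by auto
          then show ?thesis using x by (simp add: rfl_def of_nat_diff)
        qed
        show ?thesis by (rule arg_cong[where f = prod_list], rule map_cong[OF refl]) (simp add: rf)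
      qed
      finally show ?thesis .
    qed
    also have "[\<dots> = prod_list (map (\<lambda>k. (-1) * (int k ^ m * (1 - int p * (int m * int k ^ (p - 2))))) ks)] (mod (int p)^2)"
      by (rule cong_prod_list) (rule refl_elem[OF assms(2) LL_elems[OF ks] assms(6)])
    also have "prod_list (map (\<lambda>k. (-1) * (int k ^ m * (1 - int p * (int m * int k ^ (p - 2))))) ks)
        = (-1) ^ l * (?P ks * prod_list (map (\<lambda>k. 1 - int p * (int m * int k ^ (p - 2))) ks))"
      unfolding prod_list_cmult LL_length[OF ks] prod_list_mult ..
    also have "\<dots> = - (?P ks * prod_list (map (\<lambda>k. 1 - int p * (int m * int k ^ (p - 2))) ks))"
      using assms(7) by simp
    also have "[- (?P ks * prod_list (map (\<lambda>k. 1 - int p * (int m * int k ^ (p - 2))) ks))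
        = - (?P ks * (1 - int p * sum_list (map (\<lambda>k. int m * int k ^ (p - 2)) ks)))] (mod (int p)^2)"
      by (intro cong_minus_minus_iff[THEN iffD2] cong_mult cong_refl prod_one_minus)
    also have "- (?P ks * (1 - int p * sum_list (map (\<lambda>k. int m * int k ^ (p - 2)) ks)))
        = - ?P ks + int p * int m * (?P ks * ?B ks)"
      by (simp add: sum_list_cmult algebra_simps)
    finally show ?thesis .
  qed
  have "?Y = sum (\<lambda>ks. ?P (sort (map (rfl p) ks))) ?A"
    by (rule reindex_perm[OF assms(1) rfl_permutes[OF p1]])
  also have "[\<dots> = sum (\<lambda>ks. - ?P ks + int p * int m * (?P ks * ?B ks)) ?A] (mod (int p)^2)"
    by (rule cong_sum) (rule elem)
  also have "sum (\<lambda>ks. - ?P ks + int p * int m * (?P ks * ?B ks)) ?A = - ?Y + int p * int m * sum (\<lambda>ks. ?P ks * ?B ks) ?A"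
    by (simp only: sum.distrib sum_negf sum_distrib_left)
  also have "\<dots> = - ?Y + (int p)^2 * (int m * t)"
    unfolding t by (simp add: power2_eq_square)
  finally have c: "(int p)^2 dvd ?Y - (- ?Y + (int p)^2 * (int m * t))"
    unfolding cong_iff_dvd_diff .
  have "2 * ?Y = (?Y - (- ?Y + (int p)^2 * (int m * t))) + (int p)^2 * (int m * t)" by simp
  then have "(int p)^2 dvd 2 * ?Y" using c by (metis dvd_add dvd_triv_left)
  moreover have "coprime ((int p)^2) 2"
    using assms(3) by (simp add: coprime_right_2_iff_odd)
  ultimately show ?thesis using coprime_dvd_mult_right_iff by blast
qed



lemma rat_cong0I:
  fixes r :: rat and d X :: int and p e :: nat
  assumes "prime p" "coprime d (int p)" "of_int d * r = of_int X" "(int p)^e dvd X"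
  shows "rat_cong0 r ((int p)^e)"
proof -
  obtain a b where q: "quotient_of r = (a, b)" by (cases "quotient_of r")
  have b0: "b > 0" using quotient_of_denom_pos[OF q] .
  have cab: "coprime a b" using quotient_of_coprime[OF q] .
  have r: "r = of_int a / of_int b" using quotient_of_div[OF q] .
  have "rat_of_int (d * a) = rat_of_int (X * b)" using assms(3) b0 unfolding r by (simp add: field_simps)
  then have eq: "d * a = X * b" by (simp only: of_int_eq_iff)
  have "(int p)^e dvd X * b" by (rule dvd_mult2[OF assms(4)])
  then have "(int p)^e dvd d * a" by (simp only: eq)
  moreover have "coprime ((int p)^e) d" using assms(2) by (simp add: coprime_commute)
  ultimately have A: "(int p)^e dvd a" by (simp add: coprime_dvd_mult_right_iff)
  have "b dvd X * b" by simp
  then have "b dvd d * a" by (simp only: eq)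
  moreover have "coprime b a" using cab by (simp add: coprime_commute)
  ultimately have "b dvd d" by (simp add: coprime_dvd_mult_left_iff)
  then have "coprime b (int p)" by (rule coprime_divisors[OF _ dvd_refl assms(2)])
  then have B: "coprime b ((int p)^e)" by simp
  show ?thesis unfolding rat_cong0_def q using A B by simp
qed

lemma rat_prod_list:
  fixes F :: int
  assumes "F = int (fact n)" "set ks \<subseteq> {1..n}"
  shows "of_int (F ^ (s * length ks)) * prod_list (map (\<lambda>k. 1 / (rat_of_nat k) ^ s) ks)
         = of_int (prod_list (map (\<lambda>k. (F div int k) ^ s) ks))"
  using assms(2)
proof (induction ks)
  case Nil then show ?case by simp
next
  case (Cons k ks)
  have k: "k \<in> {1..n}" using Cons.prems by simp
  have "k dvd fact n" using k by (intro dvd_fact) auto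
  then have "int k dvd int (fact n)" by (simp only: int_dvd_int_iff)
  then have "int k dvd F" using assms(1) by simp
  then have dv: "rat_of_int (F div int k) = rat_of_int F / rat_of_nat k" by (simp add: of_int_div)
  have k0: "rat_of_nat k \<noteq> 0" using k by simp
  have "of_int (F ^ (s * length (k # ks))) * prod_list (map (\<lambda>k. 1 / (rat_of_nat k) ^ s) (k # ks))
      = (rat_of_int F ^ s * (1 / rat_of_nat k ^ s)) * (of_int (F ^ (s * length ks)) * prod_list (map (\<lambda>k. 1 / (rat_of_nat k) ^ s) ks))"
    by (simp add: power_add power_mult algebra_simps)
  also have "rat_of_int F ^ s * (1 / rat_of_nat k ^ s) = rat_of_int ((F div int k) ^ s)"
    using k0 by (simp add: dv power_divide)
  also have "of_int (F ^ (s * length ks)) * prod_list (map (\<lambda>k. 1 / (rat_of_nat k) ^ s) ks)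
      = of_int (prod_list (map (\<lambda>k. (F div int k) ^ s) ks))"
    using Cons by simp
  finally show ?case by simp
qed

lemma rat_side:
  fixes R :: "nat list \<Rightarrow> bool"
  shows "of_int (int (fact n) ^ (s * l)) * (\<Sum>ks\<in>LL R l n. \<Prod>i<l. 1 / (of_nat (ks ! i))^s)
     = (of_int (\<Sum>ks\<in>LL R l n. prod_list (map (\<lambda>k. (int (fact n) div int k) ^ s) ks)) :: rat)"
proof -
  have "of_int (int (fact n) ^ (s * l)) * (\<Prod>i<l. 1 / (of_nat (ks ! i))^s)
      = (of_int (prod_list (map (\<lambda>k. (int (fact n) div int k) ^ s) ks)) :: rat)" if ks: "ks \<in> LL R l n" for ks
  proof -
    have l: "length ks = l" using LL_length[OF ks] .
    have "(\<Prod>i<l. 1 / (rat_of_nat (ks ! i))^s) = prod_list (map (\<lambda>k. 1 / (rat_of_nat k) ^ s) ks)"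
      using prod_nth_list[of "\<lambda>k. 1 / (rat_of_nat k) ^ s" ks] l by simp
    moreover have sub: "set ks \<subseteq> {1..n}" using LL_elems[OF ks] by blast
    ultimately show ?thesis using rat_prod_list[OF refl sub, of s] l by simp
  qed
  then show ?thesis by (simp add: sum_distrib_left)
qed

lemma MHS_LL: "MHS (replicate l s) n = (\<Sum>ks\<in>LL (sorted_wrt (<)) l n. \<Prod>i<l. 1 / (of_nat (ks ! i))^s)"
  unfolding MHS_def LL_def by (intro sum.cong refl) (auto intro!: prod.cong)

lemma MHSS_LL: "MHSS (replicate l s) n = (\<Sum>ks\<in>LL (sorted_wrt (\<le>)) l n. \<Prod>i<l. 1 / (of_nat (ks ! i))^s)"
  unfolding MHSS_def LL_def by (intro sum.cong refl) (auto intro!: prod.cong)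

lemma inv_elem:
  assumes "prime p" "k \<in> {1..p-1}" and kF: "int k dvd F"
  shows "[(F div int k) ^ s = F ^ s * int k ^ ((p * (p - 1) - 1) * s)] (mod (int p)^2)"
proof -
  let ?E = "p * (p - 1) - 1"
  have p2: "p \<ge> 2" using assms(1) prime_ge_2_nat by blast
  have pp: "p * (p - 1) \<ge> 1" using p2 by simp
  have "\<not> p dvd k" using assms(2) p2 by (auto dest: dvd_imp_le)
  then have "coprime p k" using prime_imp_coprime[OF assms(1)] by blast
  then have "coprime k p" by (simp add: coprime_commute)
  then have "coprime k (p^2)" by simp
  then have "[k ^ totient (p^2) = 1] (mod p^2)" by (rule euler_theorem)
  moreover have "totient (p^2) = p * (p - 1)" using totient_prime_power[OF assms(1), of 2] by simp
  ultimately have "[k ^ (p * (p - 1)) = 1] (mod p^2)" by simp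
  then have eu: "[int k ^ (p * (p - 1)) = 1] (mod (int p)^2)"
    using cong_int_iff[of "k ^ (p * (p - 1))" 1 "p^2"] by simp
  obtain q where F: "F = int k * q" using kF by (auto elim: dvdE)
  have "F div int k = q" using F assms(2) by simp
  have "F * int k ^ ?E = q * int k ^ (p * (p - 1))"
  proof -
    have "Suc ?E = p * (p - 1)" using pp by linarith
    then have "int k ^ (p * (p - 1)) = int k * int k ^ ?E" by (metis power_Suc)
    then show ?thesis unfolding F by simp
  qed
  moreover have "[q * int k ^ (p * (p - 1)) = q * 1] (mod (int p)^2)" by (rule cong_mult[OF cong_refl eu])
  ultimately have "[F div int k = F * int k ^ ?E] (mod (int p)^2)"
    using \<open>F div int k = q\<close> by (simp add: cong_sym)
  then have "[(F div int k) ^ s = (F * int k ^ ?E) ^ s] (mod (int p)^2)" by (rule cong_pow)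
  then show ?thesis by (simp add: power_mult_distrib power_mult)
qed



lemma main_R:
  assumes "goodR R" "s > 0" "l > 0" "prime p" "odd p" "\<not> (p - 1) dvd (s * l)" "\<not> (p - 1) dvd (l * s + 1)"
  shows "(int p)^(par (l * s - 1)) dvd (\<Sum>ks\<in>LL R l (p-1). prod_list (map (\<lambda>k. (int (fact (p-1)) div int k) ^ s) ks))"
proof -
  define E where "E = p * (p - 1) - 1"
  define m where "m = E * s"
  define F where "F = (int (fact (p-1)))"
  let ?Y = "\<Sum>ks\<in>LL R l (p-1). prod_list (map (\<lambda>k. int k ^ m) ks)"
  let ?X = "\<Sum>ks\<in>LL R l (p-1). prod_list (map (\<lambda>k. (F div int k) ^ s) ks)"
  have p2: "p \<ge> 2" using assms(4) prime_ge_2_nat by blast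
  have p3: "p \<ge> 3" using p2 assms(5) by (cases "p = 2") auto
  have pp: "p * (p - 1) \<ge> 1" using p3 by simp
  have E1: "E + 1 = p * (p - 1)" unfolding E_def using pp by linarith
  have ml: "m * l + s * l = p * (p - 1) * (s * l)"
  proof -
    have "m * l + s * l = (E + 1) * (s * l)" unfolding m_def by (simp add: algebra_simps)
    then show ?thesis unfolding E1 .
  qed
  obtain g where g: "residue_primroot p g" using prime_primitive_root_exists[OF _ assms(4)] p2 by auto
  then have cg: "coprime g p" and og: "ord p g = p - 1"
    by (auto simp: residue_primroot_def totient_prime[OF assms(4)] coprime_commute)
  have Ydvd: "(int p)^(par (l * s - 1)) dvd ?Y"
  proof (cases "odd (l * s)")
    case True
    then obtain r where r: "l * s = 2 * r + 1" using oddE[OF True] by blast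
    then have par: "par (l * s - 1) = 2" by (simp add: par_def)
    have ol: "odd l" and os: "odd s" using True by auto
    have "even (p - 1)" using assms(5) p2 by simp
    then have "even (p * (p - 1))" by simp
    then have oE: "odd E" unfolding E_def using pp p3 by (simp add: even_diff_nat)
    have om: "odd m" unfolding m_def using oE os by simp
    have nd: "\<not> (p - 1) dvd (m * l + (p - 2))"
    proof
      assume h: "(p - 1) dvd (m * l + (p - 2))"
      have ls: "l * s = s * l" by simp
      have "(m * l + (p - 2)) + (l * s + 1) = p * (p - 1) * (s * l) + (p - 1)"
        using ml ls p3 by linarith
      moreover have "(p - 1) dvd (p * (p - 1) * (s * l) + (p - 1))" by simp
      ultimately have sm: "(p - 1) dvd ((m * l + (p - 2)) + (l * s + 1))" by simp
      have "(p - 1) dvd (l * s + 1)" using dvd_add_right_iff[OF h] sm by blast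
      then show False using assms(7) by simp
    qed
    show ?thesis using modp2[OF assms(1,4,5) cg og om ol nd] par by simp
  next
    case False
    then have par: "par (l * s - 1) = 1" using assms(2,3) by (auto simp: par_def)
    have nd: "\<not> (p - 1) dvd (m * l)"
    proof
      assume h: "(p - 1) dvd (m * l)"
      have sm: "(p - 1) dvd (m * l + s * l)" unfolding ml by simp
      have "(p - 1) dvd (s * l)" using dvd_add_right_iff[OF h] sm by blast
      then show False using assms(6) by simp
    qed
    show ?thesis using modp_A[OF assms(1,4) cg og nd] par by simp
  qed
  have cong: "[?X = F ^ (s * l) * ?Y] (mod (int p)^2)"
  proof -
    have "[?X = (\<Sum>ks\<in>LL R l (p-1). F ^ (s * l) * prod_list (map (\<lambda>k. int k ^ m) ks))] (mod (int p)^2)"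
    proof (rule cong_sum)
      fix ks assume ks: "ks \<in> LL R l (p - 1)"
      have "[prod_list (map (\<lambda>k. (F div int k) ^ s) ks) = prod_list (map (\<lambda>k. F ^ s * int k ^ m) ks)] (mod (int p)^2)"
      proof (rule cong_prod_list)
        fix k assume k: "k \<in> set ks"
        have kU: "k \<in> {1..p-1}" using LL_elems[OF ks k] .
        have "k dvd fact (p - 1)" using kU by (intro dvd_fact) auto
        then have "int k dvd int (fact (p - 1))" by (simp only: int_dvd_int_iff)
        then have kF: "int k dvd F" unfolding F_def .
        show "[(F div int k) ^ s = F ^ s * int k ^ m] (mod (int p)^2)"
          using inv_elem[OF assms(4) kU kF] unfolding m_def E_def .
      qed
      also have "prod_list (map (\<lambda>k. F ^ s * int k ^ m) ks) = F ^ (s * l) * prod_list (map (\<lambda>k. int k ^ m) ks)"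
        by (simp add: prod_list_cmult LL_length[OF ks] power_mult)
      finally show "[prod_list (map (\<lambda>k. (F div int k) ^ s) ks) = F ^ (s * l) * prod_list (map (\<lambda>k. int k ^ m) ks)] (mod (int p)^2)" .
    qed
    then show ?thesis by (simp add: sum_distrib_left)
  qed
  have "(int p)^(par (l * s - 1)) dvd (int p)^2"
    by (rule le_imp_power_dvd) (simp add: par_def)
  then have "[?X = F ^ (s * l) * ?Y] (mod (int p)^(par (l * s - 1)))" by (rule cong_dvd_modulus[OF cong])
  moreover have "(int p)^(par (l * s - 1)) dvd F ^ (s * l) * ?Y" using Ydvd by simp
  ultimately have "(int p)^(par (l * s - 1)) dvd ?X" using cong_dvd_iff by blast
  then show ?thesis unfolding F_def .
qed

lemma coprime_fact_pow:
  assumes "prime p"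
  shows "coprime (int (fact (p - 1)) ^ n) (int p)"
proof -
  have "\<not> p dvd fact (p - 1)" using assms prime_gt_0_nat[OF assms] by (simp add: prime_dvd_fact_iff)
  then have "coprime p (fact (p - 1))" using prime_imp_coprime[OF assms] by blast
  then have "coprime (fact (p - 1)) p" by (simp only: coprime_commute)
  then have "coprime (int (fact (p - 1))) (int p)" by (simp only: coprime_int_iff)
  then show ?thesis by simp
qed

lemma final_R:
  assumes "goodR R" "s > 0" "l > 0" "prime p" "odd p" "\<not> (p - 1) dvd (s * l)" "\<not> (p - 1) dvd (l * s + 1)"
    and "r = (\<Sum>ks\<in>LL R l (p-1). \<Prod>i<l. 1 / (of_nat (ks ! i))^s)"
  shows "rat_cong0 r ((int p)^(par (l * s - 1)))" "rat_cong0 r (int p)"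
proof -
  let ?X = "\<Sum>ks\<in>LL R l (p-1). prod_list (map (\<lambda>k. (int (fact (p-1)) div int k) ^ s) ks)"
  have eq: "of_int (int (fact (p - 1)) ^ (s * l)) * r = of_int ?X"
    unfolding assms(8) by (rule rat_side)
  have d: "(int p)^(par (l * s - 1)) dvd ?X" by (rule main_R[OF assms(1-7)])
  show "rat_cong0 r ((int p)^(par (l * s - 1)))"
    by (rule rat_cong0I[OF assms(4) coprime_fact_pow[OF assms(4)] eq d])
  have "(int p)^1 dvd (int p)^(par (l * s - 1))" by (rule le_imp_power_dvd) (simp add: par_def)
  then have "(int p)^1 dvd ?X" using d by (rule dvd_trans)
  from rat_cong0I[OF assms(4) coprime_fact_pow[OF assms(4)] eq this]
  show "rat_cong0 r (int p)" by simp
qed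

theorem theorem2p14:
  fixes s l p :: nat
  assumes "s > 0" and "l > 0" and "prime p" and "odd p"
  shows "((p \<ge> l + 2 \<and> \<not> (p - 1) dvd (s * l) \<and> (\<forall>k\<in>{1..l}. \<not> (p - 1) dvd (k * s + 1))) \<longrightarrow>
            rat_cong0 (MHS (replicate l s) (p - 1)) (int p ^ par (l * s - 1)) \<and>
            rat_cong0 (MHSS (replicate l s) (p - 1)) (int p ^ par (l * s - 1))) \<and>
         (p \<ge> l * s + 3 \<longrightarrow>
            rat_cong0 (MHS (replicate l s) (p - 1)) (int p ^ par (l * s - 1)) \<and>
            rat_cong0 (MHSS (replicate l s) (p - 1)) (int p ^ par (l * s - 1)) \<and>
            rat_cong0 (MHS (replicate l s) (p - 1)) (int p))"
proof -
  have key: "rat_cong0 (MHS (replicate l s) (p - 1)) (int p ^ par (l * s - 1)) \<and>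
             rat_cong0 (MHSS (replicate l s) (p - 1)) (int p ^ par (l * s - 1)) \<and>
             rat_cong0 (MHS (replicate l s) (p - 1)) (int p)"
    if h1: "\<not> (p - 1) dvd (s * l)" and h2: "\<not> (p - 1) dvd (l * s + 1)"
  proof -
    note A = final_R[OF goodR_lt assms(1-4) h1 h2 MHS_LL]
    note B = final_R[OF goodR_le assms(1-4) h1 h2 MHSS_LL]
    show ?thesis using A B by simp
  qed
  have part1: "(p \<ge> l + 2 \<and> \<not> (p - 1) dvd (s * l) \<and> (\<forall>k\<in>{1..l}. \<not> (p - 1) dvd (k * s + 1))) \<longrightarrow>
            rat_cong0 (MHS (replicate l s) (p - 1)) (int p ^ par (l * s - 1)) \<and>
            rat_cong0 (MHSS (replicate l s) (p - 1)) (int p ^ par (l * s - 1))"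
  proof
    assume h: "p \<ge> l + 2 \<and> \<not> (p - 1) dvd (s * l) \<and> (\<forall>k\<in>{1..l}. \<not> (p - 1) dvd (k * s + 1))"
    have "\<not> (p - 1) dvd (l * s + 1)" using h assms(2) by auto
    then show "rat_cong0 (MHS (replicate l s) (p - 1)) (int p ^ par (l * s - 1)) \<and>
            rat_cong0 (MHSS (replicate l s) (p - 1)) (int p ^ par (l * s - 1))"
      using key h by blast
  qed
  have part2: "p \<ge> l * s + 3 \<longrightarrow>
            rat_cong0 (MHS (replicate l s) (p - 1)) (int p ^ par (l * s - 1)) \<and>
            rat_cong0 (MHSS (replicate l s) (p - 1)) (int p ^ par (l * s - 1)) \<and>
            rat_cong0 (MHS (replicate l s) (p - 1)) (int p)"
  proof
    assume h: "p \<ge> l * s + 3"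
    have sl0: "s * l > 0" using assms(1,2) by simp
    have "\<not> (p - 1) dvd (s * l)"
    proof
      assume "(p - 1) dvd (s * l)"
      then have "p - 1 \<le> s * l" using sl0 by (rule dvd_imp_le)
      then show False using h by (simp add: mult.commute)
    qed
    moreover have "\<not> (p - 1) dvd (l * s + 1)"
    proof
      assume "(p - 1) dvd (l * s + 1)"
      then have "p - 1 \<le> l * s + 1" by (rule dvd_imp_le) simp
      then show False using h by simp
    qed
    ultimately show "rat_cong0 (MHS (replicate l s) (p - 1)) (int p ^ par (l * s - 1)) \<and>
            rat_cong0 (MHSS (replicate l s) (p - 1)) (int p ^ par (l * s - 1)) \<and>
            rat_cong0 (MHS (replicate l s) (p - 1)) (int p)" by (rule key)
  qed
  show ?thesis using part1 part2 by blast
qed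

end
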